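(* Let $K_{n_1,n_2}$ be the complete bipartite graph with parts $V_1,V_2$, where $n_1=|V_1|\ge 2$ and $n_2=|V_2|\ge 2$. Then the clique number of the 1-skeleton of its cut polytope satisfies $$\omega(\mathrm{CUT}(K_{n_1,n_2}))\ge 2^{\min\{n_1,n_2\}-1}.$$
   Context: For an undirected graph $G=(V,E)$ and $S\subseteq V$, $\delta(S)\subseteq E$ denotes the set of edges with exactly one endpoint in $S$, and $\mathbf v(S)\in\{0,1\}^{E}$ is its incidence vector ($v(S)_e=1$ iff $e\in\delta(S)$). The cut polytope is $\mathrm{CUT}(G)=\operatorname{conv}\{\mathbf v(S):S\subseteq V\}\subset\mathbb R^{E}$. The 1-skeleton of a polytope is the graph whose vertices are the polytope's vertices and whose edges are its one-dimensional faces; $\omega$ denotes its clique number. *)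

theory Defs
  imports "HOL-Analysis.Analysis"
begin

text \<open>Complete bipartite graph K_{n1,n2}: vertex set 'a + 'b (parts V1 = Inl ` UNIV,
  V2 = Inr ` UNIV), edge set 'a \<times> 'b (edge (i,j) joins Inl i and Inr j).\<close>

definition cut_vector :: "('a::finite + 'b::finite) set \<Rightarrow> real^('a \<times> 'b)" where
  "cut_vector S = (\<chi> e. if (Inl (fst e) \<in> S) \<noteq> (Inr (snd e) \<in> S) then 1 else 0)"

definition cut_polytope_Kbip :: "(real^('a::finite \<times> 'b::finite)) set" where
  "cut_polytope_Kbip = convex hull (range cut_vector)"

definition skeleton_adjacent :: "'v::euclidean_space set \<Rightarrow> 'v \<Rightarrow> 'v \<Rightarrow> bool" where
  "skeleton_adjacent P u v \<longleftrightarrow> u \<noteq> v \<and> u extreme_point_of P \<and> v extreme_point_of P \<and>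
     (\<exists>F. F face_of P \<and> aff_dim F = 1 \<and> u \<in> F \<and> v \<in> F)"

definition skeleton_clique :: "'v::euclidean_space set \<Rightarrow> 'v set \<Rightarrow> bool" where
  "skeleton_clique P C \<longleftrightarrow> C \<subseteq> {x. x extreme_point_of P} \<and>
     (\<forall>u\<in>C. \<forall>v\<in>C. u \<noteq> v \<longrightarrow> skeleton_adjacent P u v)"

definition skeleton_clique_number_ge :: "'v::euclidean_space set \<Rightarrow> nat \<Rightarrow> bool" where
  "skeleton_clique_number_ge P k \<longleftrightarrow> (\<exists>C. finite C \<and> card C = k \<and> skeleton_clique P C)"

end

theory Submission
  imports Defs
begin

definition cb :: "('a::finite + 'b::finite) set \<Rightarrow> 'a \<times> 'b \<Rightarrow> bool" where
  "cb X e = ((Inl (fst e) \<in> X) \<noteq> (Inr (snd e) \<in> X))"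

lemma cv_nth: "cut_vector X $ e = (if cb X e then 1 else 0)"
  by (simp add: cut_vector_def cb_def)

lemma cv_eq: "(\<forall>e. cb X e = cb Y e) \<Longrightarrow> cut_vector X = cut_vector Y"
  by (simp add: vec_eq_iff cv_nth)

lemma face_lemma:
  fixes S T :: "('a::finite + 'b::finite) set"
  assumes agree: "\<And>X. (\<forall>e. cb S e = cb T e \<longrightarrow> cb X e = cb S e) \<Longrightarrow>
      cut_vector X = cut_vector S \<or> cut_vector X = cut_vector T"
  shows "\<exists>F. F face_of (cut_polytope_Kbip::(real^('a\<times>'b)) set) \<and> cut_vector S \<in> F \<and>
     cut_vector T \<in> F \<and> F \<subseteq> convex hull {cut_vector S, cut_vector T}"
proof -
  define c :: "real^('a\<times>'b)" where
    "c = (\<chi> e. if cb S e = cb T e then (if cb S e then 1 else -1) else 0)"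
  define b where "b = (\<Sum>e\<in>UNIV. if cb S e \<and> cb T e then 1 else 0::real)"
  define h where "h X e = c$e * (cut_vector X $ e) - (if cb S e \<and> cb T e then 1 else 0::real)" for X e
  have hle: "h X e \<le> 0" for X e by (auto simp: h_def c_def cv_nth)
  have h0: "h X e = 0 \<longleftrightarrow> (cb S e = cb T e \<longrightarrow> cb X e = cb S e)" for X e
    by (auto simp: h_def c_def cv_nth)
  have eq: "c \<bullet> cut_vector X = b + (\<Sum>e\<in>UNIV. h X e)" for X
    by (simp add: inner_vec_def b_def h_def sum_subtractf)
  have key: "c \<bullet> cut_vector X \<le> b \<and> (c \<bullet> cut_vector X = b \<longleftrightarrow> (\<forall>e. cb S e = cb T e \<longrightarrow> cb X e = cb S e))" for X
  proof -
    have s: "(\<Sum>e\<in>UNIV. - h X e) = 0 \<longleftrightarrow> (\<forall>e\<in>UNIV. - h X e = 0)"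
      by (rule sum_nonneg_eq_0_iff) (auto simp: hle)
    have "(\<Sum>e\<in>UNIV. h X e) \<le> 0" by (rule sum_nonpos) (simp add: hle)
    moreover have "(\<Sum>e\<in>UNIV. h X e) = 0 \<longleftrightarrow> (\<forall>e. h X e = 0)"
      using s by (simp add: sum_negf)
    ultimately show ?thesis using eq[of X] h0[of X] by auto
  qed
  let ?P = "cut_polytope_Kbip::(real^('a\<times>'b)) set"
  define F where "F = ?P \<inter> {x. c \<bullet> x = b}"
  have Psub: "?P \<subseteq> {x. c \<bullet> x \<le> b}"
    unfolding cut_polytope_Kbip_def
  proof (rule hull_minimal)
    show "range cut_vector \<subseteq> {x. c \<bullet> x \<le> b}"
    proof
      fix x :: "real^('a\<times>'b)" assume "x \<in> range cut_vector"
      then obtain X where "x = cut_vector X" by blast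
      then show "x \<in> {x. c \<bullet> x \<le> b}" using conjunct1[OF key[of X]] by simp
    qed
    show "convex {x. c \<bullet> x \<le> b}" by (rule convex_halfspace_le)
  qed
  have face: "F face_of ?P"
    unfolding F_def
    by (rule face_of_Int_supporting_hyperplane_le) (use Psub in \<open>auto simp: cut_polytope_Kbip_def convex_convex_hull\<close>)
  have inP: "cut_vector X \<in> ?P" for X
    unfolding cut_polytope_Kbip_def by (rule hull_inc) simp
  have uF: "cut_vector S \<in> F" using key[of S] inP[of S] by (auto simp: F_def)
  have vF: "cut_vector T \<in> F" using key[of T] inP[of T] by (auto simp: F_def)
  have fin: "finite (range (cut_vector :: ('a+'b) set \<Rightarrow> real^('a\<times>'b)))" by simp
  obtain S' where S': "S' \<subseteq> range cut_vector" "F = convex hull S'"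
    using face_of_convex_hull_subset[OF finite_imp_compact[OF fin]] face
    unfolding cut_polytope_Kbip_def by blast
  have "S' \<subseteq> {cut_vector S, cut_vector T}"
  proof
    fix x assume x: "x \<in> S'"
    then obtain X where X: "x = cut_vector X" using S' by auto
    have "x \<in> F" unfolding S'(2) using x by (rule hull_inc)
    then have "c \<bullet> cut_vector X = b" using X by (simp add: F_def)
    then have "\<forall>e. cb S e = cb T e \<longrightarrow> cb X e = cb S e" using key[of X] by blast
    then have "cut_vector X = cut_vector S \<or> cut_vector X = cut_vector T" by (rule agree)
    then show "x \<in> {cut_vector S, cut_vector T}" using X by blast
  qed
  then have "F \<subseteq> convex hull {cut_vector S, cut_vector T}" unfolding S'(2) by (rule hull_mono)
  then show ?thesis using face uF vF by blast
qed

lemma extreme_cv: "cut_vector S extreme_point_of (cut_polytope_Kbip::(real^('a::finite\<times>'b::finite)) set)"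
proof -
  obtain F where F: "F face_of (cut_polytope_Kbip::(real^('a\<times>'b)) set)" "cut_vector S \<in> F"
     "F \<subseteq> convex hull {cut_vector S, cut_vector S}"
    using face_lemma[of S S] cv_eq by blast
  then have "F = {cut_vector S}" by auto
  then show ?thesis using F(1) face_of_singleton by metis
qed

lemma adjacent_cv:
  fixes S T :: "('a::finite + 'b::finite) set"
  assumes agree: "\<And>X. (\<forall>e. cb S e = cb T e \<longrightarrow> cb X e = cb S e) \<Longrightarrow>
      cut_vector X = cut_vector S \<or> cut_vector X = cut_vector T"
    and ne: "cut_vector S \<noteq> cut_vector T"
  shows "skeleton_adjacent (cut_polytope_Kbip::(real^('a\<times>'b)) set) (cut_vector S) (cut_vector T)"
proof -
  obtain F where F: "F face_of (cut_polytope_Kbip::(real^('a\<times>'b)) set)" "cut_vector S \<in> F"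
     "cut_vector T \<in> F" "F \<subseteq> convex hull {cut_vector S, cut_vector T}"
    using face_lemma[of S T, OF agree] by blast
  have "aff_dim F \<le> aff_dim (convex hull {cut_vector S, cut_vector T})"
    by (rule aff_dim_subset[OF F(4)])
  moreover have "aff_dim {cut_vector S, cut_vector T} \<le> aff_dim F"
    by (rule aff_dim_subset) (use F in auto)
  ultimately have "aff_dim F = 1" using ne by (simp add: aff_dim_convex_hull)
  then show ?thesis unfolding skeleton_adjacent_def using F ne extreme_cv by blast
qed

lemma main_matching:
  fixes M :: "('a::finite \<times> 'b::finite) set"
  assumes match: "\<forall>p\<in>M. \<forall>q\<in>M. (fst p = fst q) = (snd p = snd q)" and p0: "(a0,b0) \<in> M"
  shows "skeleton_clique_number_ge (cut_polytope_Kbip :: (real^('a \<times> 'b)) set) (2 ^ (card M - 1))"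
proof -
  define SS where "SS T = {Inl a | a b. (a,b)\<in>T} \<union> {Inr b | a b. (a,b)\<in>T}"
    for T :: "('a \<times> 'b) set"
  have memb: "(Inl a \<in> SS T \<longleftrightarrow> (a,b)\<in>T) \<and> (Inr b \<in> SS T \<longleftrightarrow> (a,b)\<in>T)"
    if "T \<subseteq> M" "(a,b) \<in> M" for T a b
    using that match unfolding SS_def by fastforce
  have agree: "cut_vector X = cut_vector (SS T) \<or> cut_vector X = cut_vector (SS T')"
    if T: "T \<subseteq> M - {(a0,b0)}" "T' \<subseteq> M - {(a0,b0)}" "T \<noteq> T'"
      and H: "\<forall>e. cb (SS T) e = cb (SS T') e \<longrightarrow> cb X e = cb (SS T) e" for T T' X
  proof -
    obtain p where p: "p \<in> T \<longleftrightarrow> p \<notin> T'" using T(3) by (auto simp: set_eq_iff)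
    then have pM: "p \<in> M" using T(1,2) by blast
    obtain a1 b1 where ab1: "(a1,b1) \<in> M" "(a1,b1) \<in> T \<longleftrightarrow> (a1,b1) \<notin> T'"
      using p pM by (cases p) auto
    define inU where "inU v = ((v \<in> SS T) \<noteq> (v \<in> SS T'))" for v
    define y where "y v = ((v \<in> X) \<noteq> (v \<in> SS T))" for v
    have TM: "T \<subseteq> M" "T' \<subseteq> M" using T by auto
    have U1: "inU (Inl a1)" "inU (Inr b1)"
      using memb[OF TM(1) ab1(1)] memb[OF TM(2) ab1(1)] ab1 by (auto simp: inU_def)
    have U0: "\<not> inU (Inl a0)" "\<not> inU (Inr b0)"
      using memb[OF TM(1) p0] memb[OF TM(2) p0] T by (auto simp: inU_def)
    have H': "inU (Inl a) = inU (Inr b) \<Longrightarrow> y (Inl a) = y (Inr b)" for a b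
      using H[rule_format, of "(a,b)"] by (auto simp: cb_def inU_def y_def)
    have claim: "y v = (if inU v then y (Inl a1) else y (Inl a0))" for v
    proof (cases v)
      case (Inl a)
      then show ?thesis
        using H'[of a b1] H'[of a1 b1] H'[of a b0] H'[of a0 b0] U1 U0 by (cases "inU v") auto
    next
      case (Inr b)
      then show ?thesis
        using H'[of a1 b] H'[of a0 b] U1 U0 by (cases "inU v") auto
    qed
    show ?thesis
    proof (cases "y (Inl a1) = y (Inl a0)")
      case True
      have "cb X e = cb (SS T) e" for e
      proof -
        have "y (Inl (fst e)) = y (Inr (snd e))"
          using claim[of "Inl (fst e)"] claim[of "Inr (snd e)"] True by presburger
        then show ?thesis by (auto simp: cb_def y_def)
      qed
      then show ?thesis using cv_eq by blast
    next
      case False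
      have "cb X e = cb (SS T') e" for e
      proof -
        have "(y (Inl (fst e)) = y (Inr (snd e))) = (inU (Inl (fst e)) = inU (Inr (snd e)))"
          using claim[of "Inl (fst e)"] claim[of "Inr (snd e)"] False by presburger
        then show ?thesis by (auto simp: cb_def y_def inU_def)
      qed
      then show ?thesis using cv_eq by blast
    qed
  qed
  define C where "C = (\<lambda>T. cut_vector (SS T) :: real^('a\<times>'b)) ` Pow (M - {(a0,b0)})"
  have inj: "inj_on (\<lambda>T. cut_vector (SS T) :: real^('a\<times>'b)) (Pow (M - {(a0,b0)}))"
  proof
    fix T T' assume T: "T \<in> Pow (M - {(a0,b0)})" "T' \<in> Pow (M - {(a0,b0)})"
      and eq: "(cut_vector (SS T) :: real^('a\<times>'b)) = cut_vector (SS T')"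
    have TM: "T \<subseteq> M" "T' \<subseteq> M" using T by auto
    have "p \<in> T \<longleftrightarrow> p \<in> T'" if p: "p \<in> M - {(a0,b0)}" for p
    proof -
      obtain a b where ab: "p = (a,b)" by (cases p)
      have "cut_vector (SS T) $ (a0,b) = (cut_vector (SS T') $ (a0,b) :: real)" using eq by simp
      then have "cb (SS T) (a0,b) = cb (SS T') (a0,b)" by (simp add: cv_nth split: if_splits)
      then show ?thesis
        using memb[OF TM(1) p0] memb[OF TM(2) p0] memb[OF TM(1), of a b] memb[OF TM(2), of a b]
          p ab T by (auto simp: cb_def)
    qed
    then show "T = T'" using T by blast
  qed
  have fin: "finite M" by simp
  have cardC: "card C = 2 ^ (card M - 1)"
    unfolding C_def using card_image[OF inj] card_Pow[of "M - {(a0,b0)}"] p0 fin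
    by (simp add: card_Diff_singleton)
  have clique: "skeleton_clique cut_polytope_Kbip C"
    unfolding skeleton_clique_def
  proof (intro conjI ballI impI)
    show "C \<subseteq> {x. x extreme_point_of cut_polytope_Kbip}" unfolding C_def using extreme_cv by blast
  next
    fix u v assume uv: "u \<in> C" "v \<in> C" "u \<noteq> v"
    then obtain T T' where T: "T \<in> Pow (M - {(a0,b0)})" "T' \<in> Pow (M - {(a0,b0)})"
      "u = cut_vector (SS T)" "v = cut_vector (SS T')" unfolding C_def by blast
    then have "T \<noteq> T'" using uv by auto
    then show "skeleton_adjacent cut_polytope_Kbip u v"
      using T uv agree[of T T'] by (auto intro!: adjacent_cv)
  qed
  show ?thesis unfolding skeleton_clique_number_ge_def
    using clique cardC by (intro exI[of _ C]) (simp add: C_def)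
qed

theorem theorem9:
  assumes "CARD('a::finite) \<ge> 2" and "CARD('b::finite) \<ge> 2"
  shows "skeleton_clique_number_ge (cut_polytope_Kbip :: (real^('a \<times> 'b)) set)
           (2 ^ (min CARD('a) CARD('b) - 1))"
proof (cases "CARD('a) \<le> CARD('b)")
  case True
  obtain f :: "'a \<Rightarrow> 'b" where f: "inj f"
    using card_le_inj[of "UNIV::'a set" "UNIV::'b set"] True by auto
  define M where "M = (\<lambda>a. (a, f a)) ` (UNIV::'a set)"
  have cM: "card M = CARD('a)" unfolding M_def by (rule card_image) (simp add: inj_on_def)
  have m: "\<forall>p\<in>M. \<forall>q\<in>M. (fst p = fst q) = (snd p = snd q)"
    using f by (auto simp: M_def inj_eq)
  obtain a0 :: 'a where True by blast
  have "(a0, f a0) \<in> M" by (simp add: M_def)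
  from main_matching[OF m this] show ?thesis using cM True by (simp add: min_def)
next
  case False
  obtain g :: "'b \<Rightarrow> 'a" where g: "inj g"
    using card_le_inj[of "UNIV::'b set" "UNIV::'a set"] False by auto
  define M where "M = (\<lambda>b. (g b, b)) ` (UNIV::'b set)"
  have cM: "card M = CARD('b)" unfolding M_def by (rule card_image) (simp add: inj_on_def)
  have m: "\<forall>p\<in>M. \<forall>q\<in>M. (fst p = fst q) = (snd p = snd q)"
    using g by (auto simp: M_def inj_eq)
  obtain b0 :: 'b where True by blast
  have "(g b0, b0) \<in> M" by (simp add: M_def)
  from main_matching[OF m this] show ?thesis using cM False by (simp add: min_def)
qed

end
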